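(* Let $E$ be a pseudo effect algebra satisfying (RDP) and let $m:E\to\mathbb R$ be a signed measure. Then $m$ is relatively bounded if and only if $m=m_1-m_2$ for some measures $m_1,m_2$ on $E$.
   Context: Pseudo effect algebra: partial algebra $(E;+,0,1)$ such that for all $a,b,c$: (i) $a+b$ and $(a+b)+c$ exist iff $b+c$ and $a+(b+c)$ exist, and then they are equal; (ii) there is exactly one $d$ and one $e$ with $a+d=e+a=1$; (iii) if $a+b$ exists there are $d,e$ with $a+b=d+a=b+e$; (iv) if $1+a$ or $a+1$ exists then $a=0$. Order: $a\le b$ iff $a+c=b$ for some $c$. (RDP): whenever $a_1+a_2=b_1+b_2$ there are $d_1,\dots,d_4$ with $d_1+d_2=a_1$, $d_3+d_4=a_2$, $d_1+d_3=b_1$, $d_2+d_4=b_2$. A signed measure is $m:E\to\mathbb R$ with $m(a+b)=m(a)+m(b)$ whenever $a+b$ is defined; a measure is a signed measure with nonnegative values. A map $m:E\to\mathbb R$ is relatively bounded if $m(W)$ is bounded in $\mathbb R$ for every subset $W\subseteq E$ that is bounded above and below in $E$. *)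

theory Defs
  imports Complex_Main
begin

text \<open>A pseudo effect algebra on the whole type 'a, with partial addition
  psum a b = Some (a+b) when defined, None otherwise.\<close>

definition pea :: "('a \<Rightarrow> 'a \<Rightarrow> 'a option) \<Rightarrow> 'a \<Rightarrow> 'a \<Rightarrow> bool" where
  "pea psum zero one \<longleftrightarrow>
     (\<forall>a b c. Option.bind (psum a b) (\<lambda>ab. psum ab c) = Option.bind (psum b c) (\<lambda>bc. psum a bc)) \<and>
     (\<forall>a. (\<exists>!d. psum a d = Some one) \<and> (\<exists>!e. psum e a = Some one)) \<and>
     (\<forall>a b s. psum a b = Some s \<longrightarrow> (\<exists>d e. psum d a = Some s \<and> psum b e = Some s)) \<and>
     (\<forall>a. (psum one a \<noteq> None \<or> psum a one \<noteq> None) \<longrightarrow> a = zero)"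

definition pea_le :: "('a \<Rightarrow> 'a \<Rightarrow> 'a option) \<Rightarrow> 'a \<Rightarrow> 'a \<Rightarrow> bool" where
  "pea_le psum a b \<longleftrightarrow> (\<exists>c. psum a c = Some b)"

definition RDP :: "('a \<Rightarrow> 'a \<Rightarrow> 'a option) \<Rightarrow> bool" where
  "RDP psum \<longleftrightarrow> (\<forall>a1 a2 b1 b2 s. psum a1 a2 = Some s \<and> psum b1 b2 = Some s \<longrightarrow>
     (\<exists>d1 d2 d3 d4. psum d1 d2 = Some a1 \<and> psum d3 d4 = Some a2 \<and>
                    psum d1 d3 = Some b1 \<and> psum d2 d4 = Some b2))"

definition signed_measure :: "('a \<Rightarrow> 'a \<Rightarrow> 'a option) \<Rightarrow> ('a \<Rightarrow> real) \<Rightarrow> bool" where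
  "signed_measure psum m \<longleftrightarrow> (\<forall>a b s. psum a b = Some s \<longrightarrow> m s = m a + m b)"

definition pea_measure :: "('a \<Rightarrow> 'a \<Rightarrow> 'a option) \<Rightarrow> ('a \<Rightarrow> real) \<Rightarrow> bool" where
  "pea_measure psum m \<longleftrightarrow> signed_measure psum m \<and> (\<forall>a. 0 \<le> m a)"

definition relatively_bounded :: "('a \<Rightarrow> 'a \<Rightarrow> 'a option) \<Rightarrow> ('a \<Rightarrow> real) \<Rightarrow> bool" where
  "relatively_bounded psum m \<longleftrightarrow>
     (\<forall>W. (\<exists>l u. \<forall>w\<in>W. pea_le psum l w \<and> pea_le psum w u) \<longrightarrow>
          bdd_above (m ` W) \<and> bdd_below (m ` W))"

end

theory Submission
  imports Defs
begin

lemma assoc1: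
  assumes "pea p z one" "p a b = Some ab" "p ab c = Some s"
  shows "\<exists>bc. p b c = Some bc \<and> p a bc = Some s"
proof -
  have "Option.bind (p a b) (\<lambda>ab. p ab c) = Option.bind (p b c) (\<lambda>bc. p a bc)"
    using assms(1) unfolding pea_def by blast
  with assms(2,3) show ?thesis by (cases "p b c") auto
qed

lemma assoc2:
  assumes "pea p z one" "p b c = Some bc" "p a bc = Some s"
  shows "\<exists>ab. p a b = Some ab \<and> p ab c = Some s"
proof -
  have "Option.bind (p a b) (\<lambda>ab. p ab c) = Option.bind (p b c) (\<lambda>bc. p a bc)"
    using assms(1) unfolding pea_def by blast
  with assms(2,3) show ?thesis by (cases "p a b") auto
qed

lemma compl_r: "pea p z one \<Longrightarrow> \<exists>!d. p a d = Some one"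
  unfolding pea_def by blast
lemma compl_l: "pea p z one \<Longrightarrow> \<exists>!e. p e a = Some one"
  unfolding pea_def by blast
lemma swap3: "pea p z one \<Longrightarrow> p a b = Some s \<Longrightarrow> \<exists>d e. p d a = Some s \<and> p b e = Some s"
  unfolding pea_def by blast
lemma zero_law: "pea p z one \<Longrightarrow> p one a \<noteq> None \<or> p a one \<noteq> None \<Longrightarrow> a = z"
  unfolding pea_def by blast

lemma one_zero: assumes "pea p z one" shows "p one z = Some one"
proof -
  obtain d where "p one d = Some one" using compl_r[OF assms] by blast
  moreover then have "d = z" using zero_law[OF assms] by auto
  ultimately show ?thesis by simp
qed

lemma zero_one: assumes "pea p z one" shows "p z one = Some one"
proof -
  obtain d where "p d one = Some one" using compl_l[OF assms] by blast
  moreover then have "d = z" using zero_law[OF assms] by auto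
  ultimately show ?thesis by simp
qed

lemma right_zero: assumes "pea p z one" shows "p a z = Some a"
proof -
  obtain e where e: "p e a = Some one" using compl_l[OF assms] by blast
  then obtain bc where bc: "p a z = Some bc" "p e bc = Some one"
    using assoc1[OF assms e one_zero[OF assms]] by blast
  have "bc = a" using compl_r[OF assms, of e] e bc(2) by blast
  with bc show ?thesis by simp
qed

lemma left_zero: assumes "pea p z one" shows "p z a = Some a"
proof -
  obtain d where d: "p a d = Some one" using compl_r[OF assms] by blast
  then obtain ab where ab: "p z a = Some ab" "p ab d = Some one"
    using assoc2[OF assms d zero_one[OF assms]] by blast
  have "ab = a" using compl_l[OF assms, of d] d ab(2) by blast
  with ab show ?thesis by simp
qed

lemma sm: "signed_measure p m \<Longrightarrow> p a b = Some s \<Longrightarrow> m s = m a + m b"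
  unfolding signed_measure_def by blast

lemma m_zero: "pea p z one \<Longrightarrow> signed_measure p m \<Longrightarrow> m z = 0"
proof -
  assume a: "pea p z one" "signed_measure p m"
  show ?thesis using sm[OF a(2) right_zero[OF a(1), of z]] by simp
qed

lemma measure_le_one:
  assumes "pea p z one" "pea_measure p m1" shows "m1 x \<le> m1 one"
proof -
  obtain d where "p x d = Some one" using compl_r[OF assms(1)] by blast
  with assms(2) show ?thesis unfolding pea_measure_def signed_measure_def by force
qed

lemma key_construct:
  assumes P: "pea p z one" and s: "p a b = Some s" and x: "p x x' = Some a" and y: "p y y' = Some b"
  shows "\<exists>d xd w. p x d = Some xd \<and> p xd w = Some s \<and> (\<exists>u. p x' y = Some u \<and> p d x' = Some u)"
proof -
  obtain t where t: "p x' b = Some t" "p x t = Some s" using assoc1[OF P x s] by blast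
  obtain u where u: "p x' y = Some u" "p u y' = Some t" using assoc2[OF P y t(1)] by blast
  obtain d where d: "p d x' = Some u" using swap3[OF P u(1)] by blast
  obtain xu where xu: "p x u = Some xu" "p xu y' = Some s" using assoc2[OF P u(2) t(2)] by blast
  obtain xd where xd: "p x d = Some xd" "p xd x' = Some xu" using assoc2[OF P d xu(1)] by blast
  obtain w where w: "p x' y' = Some w" "p xd w = Some s" using assoc1[OF P xd(2) xu(2)] by blast
  show ?thesis using xd(1) w(2) u(1) d by blast
qed

theorem proposition3p3:
  fixes psum :: "'a \<Rightarrow> 'a \<Rightarrow> 'a option" and zero one :: 'a and m :: "'a \<Rightarrow> real"
  assumes "pea psum zero one" and "RDP psum" and "signed_measure psum m"
  shows "relatively_bounded psum m \<longleftrightarrow>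
         (\<exists>m1 m2. pea_measure psum m1 \<and> pea_measure psum m2 \<and> m = (\<lambda>x. m1 x - m2 x))"
proof
  assume rb: "relatively_bounded psum m"
  have "\<forall>w\<in>UNIV. pea_le psum zero w \<and> pea_le psum w one"
    using left_zero[OF assms(1)] compl_r[OF assms(1)] unfolding pea_le_def by blast
  then have "bdd_above (m ` UNIV)" using rb unfolding relatively_bounded_def
    by (meson UNIV_I)
  then obtain B where B: "\<And>x. m x \<le> B" by (auto simp: bdd_above_def)
  define mp where "mp a = Sup (m ` {b. pea_le psum b a})" for a
  have ne: "m ` {b. pea_le psum b a} \<noteq> {}" for a
    using right_zero[OF assms(1)] unfolding pea_le_def by blast
  have bdd: "bdd_above (m ` {b. pea_le psum b a})" for a
    using B by (auto simp: bdd_above_def)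
  have upper: "pea_le psum b a \<Longrightarrow> m b \<le> mp a" for a b
    unfolding mp_def by (rule cSup_upper) (use bdd in auto)
  have least: "(\<And>b. pea_le psum b a \<Longrightarrow> m b \<le> C) \<Longrightarrow> mp a \<le> C" for a C
    unfolding mp_def by (rule cSup_least) (use ne in auto)
  have add: "mp s = mp a + mp b" if s: "psum a b = Some s" for a b s
  proof (rule antisym)
    show "mp s \<le> mp a + mp b"
    proof (rule least)
      fix zz assume "pea_le psum zz s"
      then obtain z' where z': "psum zz z' = Some s" unfolding pea_le_def by blast
      obtain d1 d2 d3 d4 where D: "psum d1 d2 = Some a" "psum d3 d4 = Some b"
        "psum d1 d3 = Some zz" "psum d2 d4 = Some z'"
        using assms(2) s z' unfolding RDP_def by blast
      have "m zz = m d1 + m d3" using sm[OF assms(3) D(3)] .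
      moreover have "m d1 \<le> mp a" using D(1) upper unfolding pea_le_def by blast
      moreover have "m d3 \<le> mp b" using D(2) upper unfolding pea_le_def by blast
      ultimately show "m zz \<le> mp a + mp b" by simp
    qed
  next
    have xy: "m x + m y \<le> mp s" if hx: "pea_le psum x a" and hy: "pea_le psum y b" for x y
    proof -
      obtain x' where x: "psum x x' = Some a" using hx unfolding pea_le_def by blast
      obtain y' where y: "psum y y' = Some b" using hy unfolding pea_le_def by blast
      obtain d xd w u where K: "psum x d = Some xd" "psum xd w = Some s"
        "psum x' y = Some u" "psum d x' = Some u"
        using key_construct[OF assms(1) s x y] by blast
      have "m xd = m x + m d" using sm[OF assms(3) K(1)] .
      moreover have "m u = m x' + m y" "m u = m d + m x'"
        using sm[OF assms(3) K(3)] sm[OF assms(3) K(4)] by auto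
      moreover have "m xd \<le> mp s" using upper K(2) unfolding pea_le_def by blast
      ultimately show ?thesis by linarith
    qed
    have "mp b \<le> mp s - mp a"
    proof (rule least)
      fix y assume y: "pea_le psum y b"
      have "mp a \<le> mp s - m y"
        by (rule least) (use xy[OF _ y] in force)
      then show "m y \<le> mp s - mp a" by linarith
    qed
    then show "mp a + mp b \<le> mp s" by linarith
  qed
  have refl: "pea_le psum a a" for a using right_zero[OF assms(1)] unfolding pea_le_def by blast
  have zl: "pea_le psum zero a" for a using left_zero[OF assms(1)] unfolding pea_le_def by blast
  have m1: "pea_measure psum mp"
    unfolding pea_measure_def signed_measure_def
    using add upper[OF zl] m_zero[OF assms(1,3)] by auto
  have m2: "pea_measure psum (\<lambda>x. mp x - m x)"
    unfolding pea_measure_def signed_measure_def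
    using add sm[OF assms(3)] upper[OF refl] by auto
  show "\<exists>m1 m2. pea_measure psum m1 \<and> pea_measure psum m2 \<and> m = (\<lambda>x. m1 x - m2 x)"
    using m1 m2 by (intro exI[of _ mp] exI[of _ "\<lambda>x. mp x - m x"]) auto
next
  assume "\<exists>m1 m2. pea_measure psum m1 \<and> pea_measure psum m2 \<and> m = (\<lambda>x. m1 x - m2 x)"
  then obtain m1 m2 where M: "pea_measure psum m1" "pea_measure psum m2" "m = (\<lambda>x. m1 x - m2 x)"
    by blast
  have "m x \<le> m1 one" "- m2 one \<le> m x" for x
    using measure_le_one[OF assms(1) M(1), of x] measure_le_one[OF assms(1) M(2), of x] M
    unfolding pea_measure_def by (auto intro: add_increasing2 simp: diff_le_eq)
       (smt (verit))
  then show "relatively_bounded psum m"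
    unfolding relatively_bounded_def bdd_above_def bdd_below_def by blast
qed

end
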